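(* Let $(I,H)$ be a finite graph without edge loops with an admissible automorphism $a$ and an $a$-stable orientation $\Omega$ without oriented cycles, let $\mathbf n$ be a common multiple of all orbit sizes $d_i$ ($i\in I$) and $d_h$ ($h\in H$), and let $(\widetilde I,\widetilde H,\widetilde\Omega)$ with automorphism $\widetilde a$ be the split-quotient quiver of $(I,H,\Omega,a,\mathbf n)$. Then the Cartan matrix associated to $(\widetilde I,\widetilde H,\widetilde a)$ (with rows and columns indexed by the representatives $(i,1)$, $i\in\widehat I$) is the transpose of the Cartan matrix associated to $(I,H,a)$: $c_{(i,1)(j,1)}=c_{ji}$ for all $i,j\in\widehat I$.
   Context: Graph conventions: $I$ is the vertex set, $H$ the set of edges with an orientation (each edge appears twice), $s,t:H\to I$ source/target, $h\mapsto\bar h$ reversal; an orientation is $\Omega\subset H$ with $H=\Omega\sqcup\bar\Omega$. An admissible automorphism $a$ consists of permutations of $I$ and $H$ with $s(a(h))=a(s(h))$, $t(a(h))=a(t(h))$, $\overline{a(h)}=a(\bar h)$, such that no two adjacent vertices lie in the same $\langle a\rangle$-orbit; we assume $a(\Omega)=\Omega$. $d_i$ (resp. $d_h$) is the size of the $\langle a\rangle$-orbit of $i$ (resp. $h$); $e_i=\mathbf n/d_i$, $e_h=\mathbf n/d_h$. Split-quotient quiver: let $\widehat I$ be a set of representatives of $\langle a\rangle$-orbits in $I$, $\widehat H$ the set of $\langle a\rangle$-orbits in $H$, $\widehat\Omega$ those in $\Omega$; for $\widehat h=\langle a\rangle h$ let $s(\widehat h)$, $t(\widehat h)$ be the representatives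 of the orbits of $s(h),t(h)$, $e_{\widehat h}=e_h$, $\overline{\widehat h}=\langle a\rangle\bar h$. Put $\widetilde I=\{(i,\zeta):i\in\widehat I,\ \zeta\in\mu_{e_i}\}$ ($\mu_e$ the complex $e$-th roots of unity), $\widetilde H=\{(\widehat h,\zeta,\zeta'):\widehat h\in\widehat H,\zeta\in\mu_{e_{s(\widehat h)}},\zeta'\in\mu_{e_{t(\widehat h)}},\ \zeta^{e_{s(\widehat h)}/e_{\widehat h}}=\zeta'^{\,e_{t(\widehat h)}/e_{\widehat h}}\}$, $s(\widehat h,\zeta,\zeta')=(s(\widehat h),\zeta)$, $t(\widehat h,\zeta,\zeta')=(t(\widehat h),\zeta')$, $\overline{(\widehat h,\zeta,\zeta')}=(\overline{\widehat h},\zeta',\zeta)$, $\widetilde\Omega=\{(\widehat h,\zeta,\zeta'):\widehat h\in\widehat\Omega\}$. Fixing a primitive $\mathbf n$-th root of unity $\eta$, $\widetilde a(i,\zeta)=(i,\zeta\eta^{d_i})$, $\widetilde a(\widehat h,\zeta,\zeta')=(\widehat h,\zeta\eta^{d_{s(\widehat h)}},\zeta'\eta^{d_{t(\widehat h)}})$; this is an admissible automorphism and $\{(i,1):i\in\widehat I\}$ is a set of orbit representatives in $\widetilde I$. Cartan matrix of $(I,H,a)$: indexed by $\widehat I$, $c_{ii}=2$ and for $i\ne j$, $-c_{ij}=d_i^{-1}\,|\{h\in H: s(h)\in\langle a\rangle i,\ t(h)\in\langle a\rangle j\}|$; similarly for $(\widetilde I,\widetilde H,\widetilde a)$ using orbit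 sizes of $\widetilde a$. *)

theory Defs
  imports Complex_Main
begin

definition orbit :: "('a \<Rightarrow> 'a) \<Rightarrow> 'a \<Rightarrow> 'a set" where
  "orbit f x = range (\<lambda>k. (f ^^ k) x)"

definition orb_size :: "('a \<Rightarrow> 'a) \<Rightarrow> 'a \<Rightarrow> nat" where
  "orb_size f x = card (orbit f x)"

text \<open>Finite graph (vertex set I, oriented-edge set H, source s, target t, reversal rv)
  without edge loops, with an admissible automorphism (aI on vertices, aH on edges).\<close>
definition graph_with_admissible_aut ::
  "'v set \<Rightarrow> 'e set \<Rightarrow> ('e \<Rightarrow> 'v) \<Rightarrow> ('e \<Rightarrow> 'v) \<Rightarrow> ('e \<Rightarrow> 'e) \<Rightarrow> ('v \<Rightarrow> 'v) \<Rightarrow> ('e \<Rightarrow> 'e) \<Rightarrow> bool" where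
  "graph_with_admissible_aut I H s t rv aI aH \<longleftrightarrow>
     finite I \<and> finite H \<and>
     (\<forall>h\<in>H. s h \<in> I \<and> t h \<in> I \<and> rv h \<in> H \<and> rv (rv h) = h \<and> rv h \<noteq> h \<and>
              s (rv h) = t h \<and> t (rv h) = s h) \<and>
     (\<forall>h\<in>H. s h \<noteq> t h) \<and>
     bij_betw aI I I \<and> bij_betw aH H H \<and>
     (\<forall>h\<in>H. s (aH h) = aI (s h) \<and> t (aH h) = aI (t h) \<and> rv (aH h) = aH (rv h)) \<and>
     (\<forall>h\<in>H. t h \<notin> orbit aI (s h))"

definition stable_acyclic_orientation ::
  "'e set \<Rightarrow> ('e \<Rightarrow> 'v) \<Rightarrow> ('e \<Rightarrow> 'v) \<Rightarrow> ('e \<Rightarrow> 'e) \<Rightarrow> ('e \<Rightarrow> 'e) \<Rightarrow> 'e set \<Rightarrow> bool" where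
  "stable_acyclic_orientation H s t rv aH \<Omega> \<longleftrightarrow>
     \<Omega> \<subseteq> H \<and> (\<forall>h\<in>H. (h \<in> \<Omega>) \<noteq> (rv h \<in> \<Omega>)) \<and> aH ` \<Omega> = \<Omega> \<and>
     acyclic {(s h, t h) | h. h \<in> \<Omega>}"

definition orbit_reps :: "'v set \<Rightarrow> ('v \<Rightarrow> 'v) \<Rightarrow> 'v set \<Rightarrow> bool" where
  "orbit_reps I aI Ihat \<longleftrightarrow> Ihat \<subseteq> I \<and> (\<forall>i\<in>I. \<exists>!j. j \<in> Ihat \<and> j \<in> orbit aI i)"

definition rep :: "'v set \<Rightarrow> ('v \<Rightarrow> 'v) \<Rightarrow> 'v \<Rightarrow> 'v" where
  "rep Ihat aI v = (THE j. j \<in> Ihat \<and> j \<in> orbit aI v)"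

definition cartan :: "'e set \<Rightarrow> ('e \<Rightarrow> 'v) \<Rightarrow> ('e \<Rightarrow> 'v) \<Rightarrow> ('v \<Rightarrow> 'v) \<Rightarrow> 'v \<Rightarrow> 'v \<Rightarrow> real" where
  "cartan H s t f i j =
     (if i = j then 2
      else - real (card {h \<in> H. s h \<in> orbit f i \<and> t h \<in> orbit f j}) / real (orb_size f i))"

definition Hhat :: "'e set \<Rightarrow> ('e \<Rightarrow> 'e) \<Rightarrow> 'e set set" where
  "Hhat H aH = orbit aH ` H"

definition Omhat :: "'e set \<Rightarrow> ('e \<Rightarrow> 'e) \<Rightarrow> 'e set set" where
  "Omhat \<Omega> aH = orbit aH ` \<Omega>"

definition e_of :: "nat \<Rightarrow> ('a \<Rightarrow> 'a) \<Rightarrow> 'a \<Rightarrow> nat" where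
  "e_of n f x = n div orb_size f x"

definition hat_s :: "'v set \<Rightarrow> ('v \<Rightarrow> 'v) \<Rightarrow> ('e \<Rightarrow> 'v) \<Rightarrow> 'e set \<Rightarrow> 'v" where
  "hat_s Ihat aI s Eo = rep Ihat aI (s (SOME h. h \<in> Eo))"

definition hat_e :: "nat \<Rightarrow> ('e \<Rightarrow> 'e) \<Rightarrow> 'e set \<Rightarrow> nat" where
  "hat_e n aH Eo = e_of n aH (SOME h. h \<in> Eo)"

definition hat_rev :: "('e \<Rightarrow> 'e) \<Rightarrow> ('e \<Rightarrow> 'e) \<Rightarrow> 'e set \<Rightarrow> 'e set" where
  "hat_rev aH rv Eo = orbit aH (rv (SOME h. h \<in> Eo))"

definition tilde_I :: "nat \<Rightarrow> 'v set \<Rightarrow> ('v \<Rightarrow> 'v) \<Rightarrow> ('v \<times> complex) set" where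
  "tilde_I n Ihat aI = {(i, z). i \<in> Ihat \<and> z ^ e_of n aI i = 1}"

definition tilde_H ::
  "nat \<Rightarrow> 'v set \<Rightarrow> 'e set \<Rightarrow> ('e \<Rightarrow> 'v) \<Rightarrow> ('e \<Rightarrow> 'v) \<Rightarrow> ('v \<Rightarrow> 'v) \<Rightarrow> ('e \<Rightarrow> 'e)
    \<Rightarrow> ('e set \<times> complex \<times> complex) set" where
  "tilde_H n Ihat H s t aI aH =
     {(Eo, z, z'). Eo \<in> Hhat H aH \<and>
        z ^ e_of n aI (hat_s Ihat aI s Eo) = 1 \<and> z' ^ e_of n aI (hat_s Ihat aI t Eo) = 1 \<and>
        z ^ (e_of n aI (hat_s Ihat aI s Eo) div hat_e n aH Eo)
          = z' ^ (e_of n aI (hat_s Ihat aI t Eo) div hat_e n aH Eo)}"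

definition tilde_Omega ::
  "nat \<Rightarrow> 'v set \<Rightarrow> 'e set \<Rightarrow> 'e set \<Rightarrow> ('e \<Rightarrow> 'v) \<Rightarrow> ('e \<Rightarrow> 'v) \<Rightarrow> ('v \<Rightarrow> 'v) \<Rightarrow> ('e \<Rightarrow> 'e)
    \<Rightarrow> ('e set \<times> complex \<times> complex) set" where
  "tilde_Omega n Ihat H \<Omega> s t aI aH = {x \<in> tilde_H n Ihat H s t aI aH. fst x \<in> Omhat \<Omega> aH}"

definition tilde_s :: "'v set \<Rightarrow> ('v \<Rightarrow> 'v) \<Rightarrow> ('e \<Rightarrow> 'v) \<Rightarrow> 'e set \<times> complex \<times> complex \<Rightarrow> 'v \<times> complex" where
  "tilde_s Ihat aI s x = (case x of (Eo, z, z') \<Rightarrow> (hat_s Ihat aI s Eo, z))"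

definition tilde_t :: "'v set \<Rightarrow> ('v \<Rightarrow> 'v) \<Rightarrow> ('e \<Rightarrow> 'v) \<Rightarrow> 'e set \<times> complex \<times> complex \<Rightarrow> 'v \<times> complex" where
  "tilde_t Ihat aI t x = (case x of (Eo, z, z') \<Rightarrow> (hat_s Ihat aI t Eo, z'))"

definition tilde_rev :: "('e \<Rightarrow> 'e) \<Rightarrow> ('e \<Rightarrow> 'e) \<Rightarrow> 'e set \<times> complex \<times> complex \<Rightarrow> 'e set \<times> complex \<times> complex" where
  "tilde_rev aH rv x = (case x of (Eo, z, z') \<Rightarrow> (hat_rev aH rv Eo, z', z))"

definition tilde_aI :: "('v \<Rightarrow> 'v) \<Rightarrow> complex \<Rightarrow> 'v \<times> complex \<Rightarrow> 'v \<times> complex" where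
  "tilde_aI aI \<eta> x = (case x of (i, z) \<Rightarrow> (i, z * \<eta> ^ orb_size aI i))"

definition tilde_aH :: "'v set \<Rightarrow> ('v \<Rightarrow> 'v) \<Rightarrow> ('e \<Rightarrow> 'v) \<Rightarrow> ('e \<Rightarrow> 'v) \<Rightarrow> complex
    \<Rightarrow> 'e set \<times> complex \<times> complex \<Rightarrow> 'e set \<times> complex \<times> complex" where
  "tilde_aH Ihat aI s t \<eta> x = (case x of (Eo, z, z') \<Rightarrow>
     (Eo, z * \<eta> ^ orb_size aI (hat_s Ihat aI s Eo), z' * \<eta> ^ orb_size aI (hat_s Ihat aI t Eo)))"

end

theory Submission
  imports Defs
begin


lemma fpa: fixes f :: "'a \<Rightarrow> 'a" and m n :: nat and x :: 'a
  shows "(f ^^ (m + n)) x = (f ^^ m) ((f ^^ n) x)"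
  by (simp add: funpow_add)

lemma funpow_mult_period:
  assumes "(f ^^ p) x = x" shows "(f ^^ (p*q)) x = x"
proof (induction q)
  case 0 then show ?case by simp
next
  case (Suc q)
  have "(f ^^ (p * Suc q)) x = (f ^^ p) ((f ^^ (p*q)) x)"
    using fpa[of p "p*q" f x] by simp
  then show ?case using Suc assms by simp
qed

lemma funpow_mod_period:
  assumes "(f ^^ p) x = x" shows "(f ^^ k) x = (f ^^ (k mod p)) x"
proof -
  have "(f ^^ k) x = (f ^^ (k mod p + p*(k div p))) x" by simp
  also have "\<dots> = (f ^^ (k mod p)) ((f ^^ (p*(k div p))) x)" by (rule fpa)
  also have "\<dots> = (f ^^ (k mod p)) x" using funpow_mult_period[OF assms] by simp
  finally show ?thesis .
qed

lemma orbit_image_period: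
  assumes "0 < p" "(f ^^ p) x = x"
  shows "orbit f x = (\<lambda>k. (f ^^ k) x) ` {..<p}"
  unfolding orbit_def
proof (intro equalityI subsetI)
  fix y assume "y \<in> range (\<lambda>k. (f ^^ k) x)"
  then obtain k where "y = (f ^^ k) x" by auto
  then have "y = (f ^^ (k mod p)) x" using funpow_mod_period[OF assms(2)] by simp
  then show "y \<in> (\<lambda>k. (f ^^ k) x) ` {..<p}" using assms(1) by auto
qed auto

lemma period_props:
  assumes "0 < p" "(f ^^ p) x = x"
  shows "finite (orbit f x)" "0 < orb_size f x" "(f ^^ orb_size f x) x = x"
        "\<And>k. (f ^^ k) x = x \<longleftrightarrow> orb_size f x dvd k"
proof -
  define q where "q = (LEAST q. 0 < q \<and> (f ^^ q) x = x)"
  have q: "0 < q \<and> (f ^^ q) x = x" unfolding q_def by (rule LeastI[of _ p]) (use assms in auto)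
  have qmin: "\<And>r. 0 < r \<Longrightarrow> r < q \<Longrightarrow> (f ^^ r) x \<noteq> x"
    unfolding q_def using not_less_Least by blast
  have inj: "inj_on (\<lambda>k. (f ^^ k) x) {..<q}"
  proof (rule inj_onI, rule ccontr)
    fix a b assume ab: "a \<in> {..<q}" "b \<in> {..<q}" "(f ^^ a) x = (f ^^ b) x" "a \<noteq> b"
    have key: "\<And>a b. a < b \<Longrightarrow> b < q \<Longrightarrow> (f ^^ a) x = (f ^^ b) x \<Longrightarrow> False"
    proof -
      fix a b assume h: "a < b" "b < q" "(f ^^ a) x = (f ^^ b) x"
      have "(f ^^ (q - b + a)) x = (f ^^ (q - b)) ((f ^^ a) x)" by (simp add: funpow_add)
      also have "\<dots> = (f ^^ (q - b)) ((f ^^ b) x)" using h by simp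
      also have "\<dots> = (f ^^ (q - b + b)) x" by (rule fpa[symmetric])
      also have "\<dots> = (f ^^ q) x" using h by simp
      also have "\<dots> = x" using q by simp
      finally have "(f ^^ (q - b + a)) x = x" .
      moreover have "0 < q - b + a" "q - b + a < q" using h by auto
      ultimately show False using qmin[of "q - b + a"] by simp
    qed
    show False
    proof (cases "a < b")
      case True then show False using ab key[of a b] by auto
    next
      case False then have "b < a" using ab(4) by simp
      then show False using ab key[of b a] by auto
    qed
  qed
  have orb: "orbit f x = (\<lambda>k. (f ^^ k) x) ` {..<q}" using q by (intro orbit_image_period) auto
  have cq: "orb_size f x = q" unfolding orb_size_def orb by (simp add: card_image[OF inj])
  show "finite (orbit f x)" using orb by simp
  show "0 < orb_size f x" using cq q by simp
  show "(f ^^ orb_size f x) x = x" using cq q by simp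
  fix k
  show "(f ^^ k) x = x \<longleftrightarrow> orb_size f x dvd k"
  proof
    assume "(f ^^ k) x = x"
    then have "(f ^^ (k mod q)) x = x" using funpow_mod_period[of q f x k] q by simp
    then have "k mod q = 0" using qmin[of "k mod q"] q by (metis mod_less_divisor neq0_conv)
    then show "orb_size f x dvd k" using cq by auto
  next
    assume "orb_size f x dvd k"
    then obtain m where "k = q * m" using cq by auto
    then show "(f ^^ k) x = x" using funpow_mult_period[of q f x m] q by simp
  qed
qed

lemma orbit_trans_mem:
  assumes "y \<in> orbit f x" "z \<in> orbit f y" shows "z \<in> orbit f x"
proof -
  obtain a where a: "y = (f ^^ a) x" using assms(1) unfolding orbit_def by auto
  obtain b where b: "z = (f ^^ b) y" using assms(2) unfolding orbit_def by auto
  have "z = (f ^^ (b + a)) x" using a b by (simp add: funpow_add)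
  then show ?thesis unfolding orbit_def by auto
qed

lemma self_in_orbit: "x \<in> orbit f x"
  unfolding orbit_def by (auto intro: range_eqI[of _ _ 0])

lemma orbit_eq_periodic:
  assumes "0 < p" "(f ^^ p) x = x" "y \<in> orbit f x"
  shows "orbit f y = orbit f x"
proof -
  obtain a where a: "y = (f ^^ a) x" using assms(3) unfolding orbit_def by auto
  have "(f ^^ (p*a - a)) y = (f ^^ (p*a - a + a)) x" using a by (simp add: funpow_add)
  also have "p*a - a + a = p*a" using assms(1) by (simp add: le_add_diff_inverse2)
  also have "(f ^^ (p*a)) x = x" by (rule funpow_mult_period[OF assms(2)])
  finally have "x \<in> orbit f y" unfolding orbit_def by (metis rangeI)
  then have xy: "x \<in> orbit f y" .
  show ?thesis
  proof (intro equalityI subsetI)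
    fix z assume "z \<in> orbit f y" then show "z \<in> orbit f x" by (rule orbit_trans_mem[OF assms(3)])
  next
    fix z assume "z \<in> orbit f x" then show "z \<in> orbit f y" by (rule orbit_trans_mem[OF xy])
  qed
qed

lemma bij_periodic:
  assumes "finite A" "bij_betw f A A" "x \<in> A"
  shows "\<exists>p>0. (f ^^ p) x = x"
proof -
  have inA: "\<And>k. (f ^^ k) x \<in> A" using bij_betw_funpow[OF assms(2)] assms(3) bij_betwE by blast
  have "\<not> inj_on (\<lambda>k. (f ^^ k) x) {..card A}"
  proof
    assume "inj_on (\<lambda>k. (f ^^ k) x) {..card A}"
    then have c: "card ((\<lambda>k. (f ^^ k) x) ` {..card A}) = Suc (card A)" by (simp add: card_image)
    have "(\<lambda>k. (f ^^ k) x) ` {..card A} \<subseteq> A" using inA by auto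
    from card_mono[OF assms(1) this] c show False by simp
  qed
  then obtain a b where ab: "a < b" "(f ^^ a) x = (f ^^ b) x"
    unfolding inj_on_def by (metis linorder_neq_iff)
  have "(f ^^ a) ((f ^^ (b - a)) x) = (f ^^ a) x" using ab using fpa[of a "b - a" f x] by simp
  moreover have "inj_on (f ^^ a) A" using bij_betw_funpow[OF assms(2)] bij_betw_def by blast
  ultimately have "(f ^^ (b - a)) x = x" using inA assms(3) inj_on_def by metis
  then show ?thesis using ab by (intro exI[of _ "b - a"]) auto
qed



lemma eta_pow_eq1:
  fixes \<eta> :: complex
  assumes "\<eta> ^ n = 1" "\<forall>k. 0 < k \<and> k < n \<longrightarrow> \<eta> ^ k \<noteq> 1" "0 < n"
  shows "\<eta> ^ k = 1 \<longleftrightarrow> n dvd k"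
proof
  assume h: "\<eta> ^ k = 1"
  have "\<eta> ^ k = \<eta> ^ (k mod n + n * (k div n))" by simp
  also have "\<dots> = \<eta> ^ (k mod n)" by (simp only: power_add power_mult assms(1) power_one mult_1_right)
  finally have "\<eta> ^ (k mod n) = 1" using h by simp
  then have "k mod n = 0" using assms(2,3) by (metis mod_less_divisor neq0_conv)
  then show "n dvd k" by auto
next
  assume "n dvd k" then obtain m where "k = n * m" by auto
  then show "\<eta> ^ k = 1" by (simp add: power_mult assms(1))
qed

lemma roots_param:
  fixes \<eta> :: complex
  assumes eq1: "\<And>k. \<eta> ^ k = 1 \<longleftrightarrow> n dvd k" and nm: "n = m * c" and m: "0 < m" and c: "0 < c"
  shows "{z. z ^ m = 1} = (\<lambda>k. \<eta> ^ (k * c)) ` {..<m}"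
        "inj_on (\<lambda>k. \<eta> ^ (k * c)) {..<m}"
proof -
  have nz: "\<eta> \<noteq> 0" using eq1[of n] nm m c by (auto simp: power_0_left)
  show inj: "inj_on (\<lambda>k. \<eta> ^ (k * c)) {..<m}"
  proof (rule inj_onI, rule ccontr)
    fix a b assume ab: "a \<in> {..<m}" "b \<in> {..<m}" "\<eta> ^ (a * c) = \<eta> ^ (b * c)" "a \<noteq> b"
    have key: "\<And>a b. a < b \<Longrightarrow> b < m \<Longrightarrow> \<eta> ^ (a * c) = \<eta> ^ (b * c) \<Longrightarrow> False"
    proof -
      fix a b :: nat assume h: "a < b" "b < m" "\<eta> ^ (a * c) = \<eta> ^ (b * c)"
      have "b = a + (b - a)" using h by simp
      then have e: "b * c = a * c + (b - a) * c" by (metis add_mult_distrib)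
      have "\<eta> ^ (b * c) = \<eta> ^ (a * c) * \<eta> ^ ((b - a) * c)"
        by (subst e) (simp only: power_add)
      then have "\<eta> ^ ((b - a) * c) = 1" using h nz by simp
      then have "m * c dvd (b - a) * c" using eq1 nm by simp
      moreover have "c \<noteq> 0" using c by auto
      ultimately have "m dvd b - a" by simp
      then show False using h by (simp add: nat_dvd_not_less)
    qed
    show False using ab key[of a b] key[of b a] by (auto simp: linorder_neq_iff)
  qed
  have sub: "(\<lambda>k. \<eta> ^ (k * c)) ` {..<m} \<subseteq> {z. z ^ m = 1}"
  proof
    fix z assume "z \<in> (\<lambda>k. \<eta> ^ (k * c)) ` {..<m}"
    then obtain k where "z = \<eta> ^ (k * c)" by auto
    then have "z ^ m = \<eta> ^ (k * n)" using nm by (simp add: power_mult[symmetric] mult_ac)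
    then show "z \<in> {z. z ^ m = 1}" using eq1 by simp
  qed
  have "card ((\<lambda>k. \<eta> ^ (k * c)) ` {..<m}) = m" using inj by (simp add: card_image)
  then show "{z. z ^ m = 1} = (\<lambda>k. \<eta> ^ (k * c)) ` {..<m}"
    using sub m card_roots_unity_eq[OF m] finite_roots_unity[of m]
    by (metis card_subset_eq One_nat_def Suc_leI)
qed

lemma count_P:
  fixes \<eta> :: complex
  assumes eq1: "\<And>k. \<eta> ^ k = 1 \<longleftrightarrow> n dvd k" and n: "n = dh * eh" and u: "dh = di * u"
    and w: "dh = dj * w" and pos: "0 < n"
  shows "card {(z::complex, z'::complex). z ^ (u * eh) = 1 \<and> z' ^ (w * eh) = 1 \<and> z ^ u = z' ^ w} = u * eh * w"
proof -
  have nz: "\<eta> \<noteq> 0" using eq1[of n] pos by (auto simp: power_0_left)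
  have dhp: "0 < dh" "0 < eh" using pos n by auto
  have pos2: "0 < eh" "0 < u" "0 < w" "0 < dh" using dhp u w by (auto intro!: gr0I)
  define F where "F z = {z'. z' ^ (w * eh) = 1 \<and> z' ^ w = z ^ u}" for z :: complex
  have S: "{(z::complex, z'::complex). z ^ (u * eh) = 1 \<and> z' ^ (w * eh) = 1 \<and> z ^ u = z' ^ w}
        = Sigma {z. z ^ (u * eh) = 1} F" unfolding F_def by auto
  have fib: "card (F z) = w" if z: "z ^ (u * eh) = 1" for z
  proof -
    have "(z ^ u) ^ eh = 1" using z by (simp add: power_mult)
    then have "z ^ u \<in> (\<lambda>k. \<eta> ^ (k * dh)) ` {..<eh}"
      using roots_param(1)[OF eq1, of eh dh] n pos2 by (auto simp: mult.commute)
    then obtain k where k: "z ^ u = \<eta> ^ (k * dh)" by auto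
    define r0 where "r0 = \<eta> ^ (k * dj)"
    have r0nz: "r0 \<noteq> 0" unfolding r0_def using nz by simp
    have r0w: "r0 ^ w = z ^ u" unfolding r0_def k w by (simp add: power_mult[symmetric] mult_ac)
    have "F z = (\<lambda>y. y * r0) ` {y. y ^ w = 1}"
    proof (intro equalityI subsetI)
      fix z' assume "z' \<in> F z"
      then have h: "z' ^ w = z ^ u" unfolding F_def by auto
      have zu: "z ^ u \<noteq> 0" using r0w r0nz by (metis power_eq_0_iff)
      have "(z' / r0) ^ w = 1" using h r0w zu by (simp add: power_divide)
      moreover have "z' = (z' / r0) * r0" using r0nz by simp
      ultimately show "z' \<in> (\<lambda>y. y * r0) ` {y. y ^ w = 1}" by blast
    next
      fix z' assume "z' \<in> (\<lambda>y. y * r0) ` {y. y ^ w = 1}"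
      then obtain y where y: "y ^ w = 1" "z' = y * r0" by auto
      have a: "z' ^ w = z ^ u" using y r0w by (simp add: power_mult_distrib)
      have "z' ^ (w * eh) = (z ^ u) ^ eh" using a by (simp add: power_mult)
      then show "z' \<in> F z" unfolding F_def using a z by (simp add: power_mult)
    qed
    moreover have "inj_on (\<lambda>y. y * r0) {y. y ^ w = 1}" using r0nz by (auto intro: inj_onI)
    ultimately show ?thesis using card_image card_roots_unity_eq[OF pos2(3)] by metis
  qed
  have fin: "finite (F z)" for z unfolding F_def
    using finite_roots_unity[of "w*eh"] pos2 by (auto intro: finite_subset[rotated])
  have "card (Sigma {z. z ^ (u * eh) = 1} F) = (\<Sum>z\<in>{z. z ^ (u * eh) = 1}. card (F z))"
    using finite_roots_unity[of "u*eh"] pos2 fin by (intro card_SigmaI) auto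
  also have "\<dots> = (\<Sum>z\<in>{z::complex. z ^ (u * eh) = 1}. w)" by (rule sum.cong[OF refl]) (simp add: fib)
  also have "\<dots> = u * eh * w" using card_roots_unity_eq[of "u*eh"] pos2 by simp
  finally show ?thesis using S by simp
qed



lemma tilde_pow:
  "(tilde_aI aI \<eta> ^^ k) (i, z) = (i, z * \<eta> ^ (k * orb_size aI i))"
  by (induction k) (simp_all add: tilde_aI_def power_add mult_ac)

lemma tilde_orbit:
  fixes \<eta> :: complex
  assumes eq1: "\<And>k. \<eta> ^ k = 1 \<longleftrightarrow> n dvd k" and dv: "orb_size aI i dvd n" and n: "0 < n"
  shows "\<And>i' z. (i', z) \<in> orbit (tilde_aI aI \<eta>) (i, 1) \<longleftrightarrow> i' = i \<and> z ^ (n div orb_size aI i) = 1"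
    "orb_size (tilde_aI aI \<eta>) (i, 1) = n div orb_size aI i"
proof -
  define di where "di = orb_size aI i"
  define ei where "ei = n div di"
  have ne: "n = ei * di" using dv unfolding ei_def di_def by simp
  have pos: "0 < ei" "0 < di" using ne n by auto
  have per: "(tilde_aI aI \<eta> ^^ ei) (i, 1) = (i, 1)"
    using eq1[of n] by (simp add: tilde_pow di_def[symmetric] ne)
  have orb: "orbit (tilde_aI aI \<eta>) (i, 1) = (\<lambda>k. (i, \<eta> ^ (k * di))) ` {..<ei}"
    using orbit_image_period[OF pos(1) per] by (simp add: tilde_pow di_def)
  have R: "{z. z ^ ei = 1} = (\<lambda>k. \<eta> ^ (k * di)) ` {..<ei}"
       "inj_on (\<lambda>k. \<eta> ^ (k * di)) {..<ei}"
    using roots_param[OF eq1 ne pos] by auto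
  have orb2: "orbit (tilde_aI aI \<eta>) (i, 1) = Pair i ` {z. z ^ ei = 1}"
    unfolding orb R(1) by auto
  show "\<And>i' z. (i', z) \<in> orbit (tilde_aI aI \<eta>) (i, 1) \<longleftrightarrow> i' = i \<and> z ^ (n div orb_size aI i) = 1"
    unfolding orb2 ei_def di_def by auto
  have "orb_size (tilde_aI aI \<eta>) (i, 1) = card {z::complex. z ^ ei = 1}"
    unfolding orb_size_def orb2 by (simp add: card_image inj_on_def)
  then show "orb_size (tilde_aI aI \<eta>) (i, 1) = n div orb_size aI i"
    using card_roots_unity_eq[OF pos(1)] unfolding ei_def di_def by simp
qed



lemma rep_eq_orbit: "orbit aI v = orbit aI w \<Longrightarrow> rep Ihat aI v = rep Ihat aI w"
  unfolding rep_def by simp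

theorem lemma2p1:
  fixes I :: "'v set" and H :: "'e set" and s t :: "'e \<Rightarrow> 'v" and rv :: "'e \<Rightarrow> 'e"
    and aI :: "'v \<Rightarrow> 'v" and aH :: "'e \<Rightarrow> 'e" and \<Omega> :: "'e set"
    and n :: nat and Ihat :: "'v set" and \<eta> :: complex
  assumes graph: "graph_with_admissible_aut I H s t rv aI aH"
    and orient: "stable_acyclic_orientation H s t rv aH \<Omega>"
    and n_pos: "n > 0"
    and dI: "\<forall>i\<in>I. orb_size aI i dvd n"
    and dH: "\<forall>h\<in>H. orb_size aH h dvd n"
    and reps: "orbit_reps I aI Ihat"
    and eta: "\<eta> ^ n = 1" "\<forall>k. 0 < k \<and> k < n \<longrightarrow> \<eta> ^ k \<noteq> 1"
  shows "\<forall>i\<in>Ihat. \<forall>j\<in>Ihat.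
           cartan (tilde_H n Ihat H s t aI aH) (tilde_s Ihat aI s) (tilde_t Ihat aI t)
                  (tilde_aI aI \<eta>) (i, 1) (j, 1)
           = cartan H s t aI j i"
proof -
  from graph have finI: "finite I" and finH: "finite H"
    and edge: "\<forall>h\<in>H. s h \<in> I \<and> t h \<in> I \<and> rv h \<in> H \<and> rv (rv h) = h \<and> rv h \<noteq> h \<and>
              s (rv h) = t h \<and> t (rv h) = s h"
    and bI: "bij_betw aI I I" and bH: "bij_betw aH H H"
    and comm: "\<forall>h\<in>H. s (aH h) = aI (s h) \<and> t (aH h) = aI (t h) \<and> rv (aH h) = aH (rv h)"
    unfolding graph_with_admissible_aut_def by auto
  from reps have IhI: "Ihat \<subseteq> I" and repu: "\<forall>i\<in>I. \<exists>!j. j \<in> Ihat \<and> j \<in> orbit aI i"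
    unfolding orbit_reps_def by auto
  have eq1: "\<And>k. \<eta> ^ k = 1 \<longleftrightarrow> n dvd k" using eta_pow_eq1[OF eta n_pos] by blast
  have perI: "\<And>v. v \<in> I \<Longrightarrow> \<exists>p>0. (aI ^^ p) v = v" using bij_periodic[OF finI bI] by blast
  have perH: "\<And>h. h \<in> H \<Longrightarrow> \<exists>p>0. (aH ^^ p) h = h" using bij_periodic[OF finH bH] by blast
  have dI_all: "0 < orb_size aI v \<and> (\<forall>k. (aI ^^ k) v = v \<longleftrightarrow> orb_size aI v dvd k)
      \<and> (\<forall>w\<in>orbit aI v. orbit aI w = orbit aI v)" if vI: "v \<in> I" for v
  proof -
    obtain p where p: "0 < p" "(aI ^^ p) v = v" using perI[OF vI] by blast
    show ?thesis using period_props(2)[OF p] period_props(4)[OF p] orbit_eq_periodic[OF p] by blast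
  qed
  have dH_all: "(aH ^^ orb_size aH h) h = h \<and> (\<forall>g\<in>orbit aH h. orbit aH g = orbit aH h)"
    if hH: "h \<in> H" for h
  proof -
    obtain p where p: "0 < p" "(aH ^^ p) h = h" using perH[OF hH] by blast
    show ?thesis using period_props(3)[OF p] orbit_eq_periodic[OF p] by blast
  qed
  have dI_pos: "\<And>v. v \<in> I \<Longrightarrow> 0 < orb_size aI v" using dI_all by blast
  have dI_dvd: "\<And>v k. v \<in> I \<Longrightarrow> (aI ^^ k) v = v \<longleftrightarrow> orb_size aI v dvd k"
    using dI_all by blast
  have dH_fix: "\<And>h. h \<in> H \<Longrightarrow> (aH ^^ orb_size aH h) h = h" using dH_all by blast
  have orbI_eq: "\<And>v w. v \<in> I \<Longrightarrow> w \<in> orbit aI v \<Longrightarrow> orbit aI w = orbit aI v"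
    using dI_all by blast
  have orbH_eq: "\<And>h g. h \<in> H \<Longrightarrow> g \<in> orbit aH h \<Longrightarrow> orbit aH g = orbit aH h"
    using dH_all by blast
  have powH: "(aH ^^ k) h \<in> H \<and> s ((aH ^^ k) h) = (aI ^^ k) (s h) \<and> t ((aH ^^ k) h) = (aI ^^ k) (t h)"
    if "h \<in> H" for k h
    using that by (induction k) (use bH comm in \<open>auto simp: bij_betwE\<close>)
  have orbH_sub: "\<And>h. h \<in> H \<Longrightarrow> orbit aH h \<subseteq> H" unfolding orbit_def using powH by auto
  have rep_props: "rep Ihat aI v \<in> Ihat \<and> rep Ihat aI v \<in> orbit aI v" if "v \<in> I" for v
  proof -
    have "\<exists>!j. j \<in> Ihat \<and> j \<in> orbit aI v" using repu that by blast
    from theI'[OF this] show ?thesis unfolding rep_def .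
  qed
  have rep_iff: "v \<in> orbit aI i \<longleftrightarrow> rep Ihat aI v = i" if iv: "i \<in> Ihat" "v \<in> I" for i v
  proof
    assume h: "v \<in> orbit aI i"
    have "i \<in> I" using iv IhI by auto
    then have "orbit aI v = orbit aI i" using orbI_eq h by blast
    then have "i \<in> orbit aI v" using self_in_orbit by metis
    moreover have u: "\<exists>!j. j \<in> Ihat \<and> j \<in> orbit aI v" using repu iv by blast
    ultimately show "rep Ihat aI v = i" unfolding rep_def
      by (intro the1_equality[OF u]) (use iv(1) in auto)
  next
    assume h: "rep Ihat aI v = i"
    have "orbit aI (rep Ihat aI v) = orbit aI v" using orbI_eq rep_props iv(2) by blast
    then show "v \<in> orbit aI i" using h self_in_orbit by metis
  qed
  have rep_size: "orb_size aI (rep Ihat aI v) = orb_size aI v" if "v \<in> I" for v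
    using orbI_eq rep_props that unfolding orb_size_def by metis
  have st_orbit: "rep Ihat aI (s g) = rep Ihat aI (s h) \<and> rep Ihat aI (t g) = rep Ihat aI (t h)"
    if hg: "h \<in> H" "g \<in> orbit aH h" for h g
  proof -
    obtain k where g: "g = (aH ^^ k) h" using hg(2) unfolding orbit_def by auto
    have "s g \<in> orbit aI (s h)" "t g \<in> orbit aI (t h)" using powH[OF hg(1), of k] g
      unfolding orbit_def by auto
    then show ?thesis using orbI_eq edge hg(1) rep_eq_orbit by metis
  qed
  have st_dvd: "orb_size aI (s h) dvd orb_size aH h \<and> orb_size aI (t h) dvd orb_size aH h"
    if "h \<in> H" for h
    using powH[OF that, of "orb_size aH h"] dH_fix[OF that] dI_dvd edge that by metis
  have hhat: "(SOME h. h \<in> Eo) \<in> H \<and> (SOME h. h \<in> Eo) \<in> Eo \<and> Eo = orbit aH (SOME h. h \<in> Eo)"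
    if EoH: "Eo \<in> Hhat H aH" for Eo
  proof -
    obtain h where h: "h \<in> H" "Eo = orbit aH h" using EoH unfolding Hhat_def by auto
    have "h \<in> Eo" using h self_in_orbit by metis
    then have "(SOME h. h \<in> Eo) \<in> Eo" by (rule someI)
    then show ?thesis using h orbH_sub orbH_eq by blast
  qed
  show ?thesis
  proof (intro ballI)
    fix i j assume i: "i \<in> Ihat" and j: "j \<in> Ihat"
    show "cartan (tilde_H n Ihat H s t aI aH) (tilde_s Ihat aI s) (tilde_t Ihat aI t)
                  (tilde_aI aI \<eta>) (i, 1) (j, 1) = cartan H s t aI j i"
    proof (cases "i = j")
      case True then show ?thesis by (simp add: cartan_def)
    next
      case False
      have iI: "i \<in> I" and jI: "j \<in> I" using i j IhI by auto
      define di where "di = orb_size aI i"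
      define dj where "dj = orb_size aI j"
      define ei where "ei = n div di"
      define ej where "ej = n div dj"
      have dipos: "0 < di" "0 < dj" using dI_pos iI jI unfolding di_def dj_def by auto
      have le: "di \<le> n" "dj \<le> n" using dI iI jI n_pos dvd_imp_le unfolding di_def dj_def by auto
      have eipos: "0 < ei" "0 < ej" unfolding ei_def ej_def using le dipos by (auto simp: div_greater_zero_iff)
      define E where "E = {Eo \<in> Hhat H aH. hat_s Ihat aI s Eo = i \<and> hat_s Ihat aI t Eo = j}"
      define P where "P Eo = {(z::complex, z'::complex). z ^ ei = 1 \<and> z' ^ ej = 1 \<and>
          z ^ (ei div hat_e n aH Eo) = z' ^ (ej div hat_e n aH Eo)}" for Eo
      define b where "b Eo = ej div hat_e n aH Eo" for Eo
      have tOi: "\<And>i' z. (i', z) \<in> orbit (tilde_aI aI \<eta>) (i, 1) \<longleftrightarrow> i' = i \<and> z ^ ei = 1"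
        "orb_size (tilde_aI aI \<eta>) (i, 1) = ei"
        using tilde_orbit[OF eq1, of aI i] dI iI n_pos unfolding ei_def di_def by auto
      have tOj: "\<And>i' z. (i', z) \<in> orbit (tilde_aI aI \<eta>) (j, 1) \<longleftrightarrow> i' = j \<and> z ^ ej = 1"
        using tilde_orbit[OF eq1, of aI j] dI jI n_pos unfolding ej_def dj_def by auto
      define T where "T = {x \<in> tilde_H n Ihat H s t aI aH. tilde_s Ihat aI s x \<in> orbit (tilde_aI aI \<eta>) (i, 1)
                     \<and> tilde_t Ihat aI t x \<in> orbit (tilde_aI aI \<eta>) (j, 1)}"
      have Teq: "T = Sigma E P"
      proof (rule set_eqI)
        fix x :: "'e set \<times> complex \<times> complex"
        obtain Eo z z' where x: "x = (Eo, z, z')" by (cases x) auto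
        show "x \<in> T \<longleftrightarrow> x \<in> Sigma E P"
          unfolding x T_def E_def P_def
          by (auto simp: tilde_H_def tilde_s_def tilde_t_def tOi tOj e_of_def ei_def ej_def di_def dj_def)
      qed
      have finE: "finite E" unfolding E_def Hhat_def using finH by auto
      have finP: "finite (P Eo)" for Eo
      proof -
        have "P Eo \<subseteq> {z. z ^ ei = 1} \<times> {z. z ^ ej = 1}" unfolding P_def by auto
        moreover have "finite ({z::complex. z ^ ei = 1} \<times> {z::complex. z ^ ej = 1})"
          using finite_roots_unity[of ei] finite_roots_unity[of ej] eipos by auto
        ultimately show ?thesis by (rule finite_subset)
      qed
      have perEo: "card (P Eo) = ei * b Eo \<and> card Eo = dj * b Eo" if Eo: "Eo \<in> E" for Eo
      proof -
        define h0 where "h0 = (SOME h. h \<in> Eo)"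
        have Eh: "Eo \<in> Hhat H aH" and hi: "hat_s Ihat aI s Eo = i" and hj: "hat_s Ihat aI t Eo = j"
          using Eo unfolding E_def by auto
        have h0: "h0 \<in> H" "Eo = orbit aH h0" using hhat[OF Eh] unfolding h0_def by auto
        have ri: "rep Ihat aI (s h0) = i" and rj: "rep Ihat aI (t h0) = j"
          using hi hj unfolding hat_s_def h0_def by auto
        have sI: "s h0 \<in> I" "t h0 \<in> I" using edge h0 by auto
        have dis: "orb_size aI (s h0) = di" "orb_size aI (t h0) = dj"
          using rep_size[OF sI(1)] rep_size[OF sI(2)] ri rj unfolding di_def dj_def by auto
        define dh where "dh = orb_size aH h0"
        define eh where "eh = n div dh"
        have he: "hat_e n aH Eo = eh" unfolding hat_e_def e_of_def eh_def dh_def h0_def ..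
        have n: "n = dh * eh" using dH h0 unfolding eh_def dh_def by auto
        obtain u where u: "dh = di * u" using st_dvd[OF h0(1)] dis unfolding dh_def by auto
        obtain w where w: "dh = dj * w" using st_dvd[OF h0(1)] dis unfolding dh_def by auto
        have ehpos: "0 < eh" using n n_pos by auto
        have "ei = u * eh" unfolding ei_def using n u dipos by simp
        moreover have "ej = w * eh" unfolding ej_def using n w dipos by simp
        ultimately have ee: "ei = u * eh" "ej = w * eh" "ei div eh = u" "ej div eh = w"
          using ehpos by auto
        have "P Eo = {(z::complex, z'::complex). z ^ (u * eh) = 1 \<and> z' ^ (w * eh) = 1 \<and> z ^ u = z' ^ w}"
          by (simp add: P_def he ee(1,2) ehpos)
        then have "card (P Eo) = u * eh * w" using count_P[OF eq1 n u w n_pos] by simp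
        moreover have "card Eo = dh" using h0 unfolding dh_def orb_size_def by simp
        ultimately show ?thesis unfolding b_def he ee using ee w by simp
      qed
      have cardT: "card T = (\<Sum>Eo\<in>E. ei * b Eo)"
        unfolding Teq using finE finP perEo by (simp add: card_SigmaI)
      define G where "G = {h \<in> H. rep Ihat aI (s h) = i \<and> rep Ihat aI (t h) = j}"
      define F where "F = {h \<in> H. s h \<in> orbit aI j \<and> t h \<in> orbit aI i}"
      have UE: "\<Union>E = G"
      proof (intro equalityI subsetI)
        fix h assume "h \<in> \<Union>E"
        then obtain Eo where Eo: "Eo \<in> E" "h \<in> Eo" by auto
        have Eh: "Eo \<in> Hhat H aH" and hi: "hat_s Ihat aI s Eo = i" and hj: "hat_s Ihat aI t Eo = j"
          using Eo unfolding E_def by auto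
        define h0 where "h0 = (SOME h. h \<in> Eo)"
        have h0: "h0 \<in> H" "Eo = orbit aH h0" using hhat[OF Eh] unfolding h0_def by auto
        have "h \<in> H" using h0 Eo orbH_sub by blast
        moreover have "rep Ihat aI (s h) = i \<and> rep Ihat aI (t h) = j"
          using st_orbit[OF h0(1), of h] Eo h0 hi hj unfolding hat_s_def h0_def by auto
        ultimately show "h \<in> G" unfolding G_def by auto
      next
        fix h assume "h \<in> G"
        then have h: "h \<in> H" "rep Ihat aI (s h) = i" "rep Ihat aI (t h) = j" unfolding G_def by auto
        define Eo where "Eo = orbit aH h"
        have Eh: "Eo \<in> Hhat H aH" unfolding Eo_def Hhat_def using h by auto
        define h0 where "h0 = (SOME h. h \<in> Eo)"
        have h0: "h0 \<in> Eo" using hhat[OF Eh] unfolding h0_def by auto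
        have "hat_s Ihat aI s Eo = i \<and> hat_s Ihat aI t Eo = j"
          using st_orbit[OF h(1), of h0] h0 h unfolding hat_s_def h0_def Eo_def by auto
        then have "Eo \<in> E" unfolding E_def using Eh by auto
        moreover have "h \<in> Eo" unfolding Eo_def by (rule self_in_orbit)
        ultimately show "h \<in> \<Union>E" by auto
      qed
      have FG: "F = rv ` G"
      proof (intro equalityI subsetI)
        fix h assume "h \<in> F"
        then have h: "h \<in> H" "s h \<in> orbit aI j" "t h \<in> orbit aI i" unfolding F_def by auto
        have "rv h \<in> G" using h edge rep_iff[OF i] rep_iff[OF j] unfolding G_def by auto
        moreover have "h = rv (rv h)" using h edge by auto
        ultimately show "h \<in> rv ` G" by blast
      next
        fix h assume "h \<in> rv ` G"
        then obtain g where g: "g \<in> G" "h = rv g" by auto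
        then show "h \<in> F" using edge rep_iff[OF i] rep_iff[OF j] unfolding G_def F_def by auto
      qed
      have injrv: "inj_on rv G"
      proof (rule inj_onI)
        fix x y assume xy: "x \<in> G" "y \<in> G" "rv x = rv y"
        then have "rv (rv x) = rv (rv y)" by simp
        moreover have "x \<in> H" "y \<in> H" using xy unfolding G_def by auto
        ultimately show "x = y" using edge by simp
      qed
      have disj: "pairwise disjnt E"
      proof (rule pairwiseI)
        fix A B assume AB: "A \<in> E" "B \<in> E" "A \<noteq> B"
        show "disjnt A B"
        proof (rule ccontr)
          assume "\<not> disjnt A B"
          then obtain x where x: "x \<in> A" "x \<in> B" unfolding disjnt_def by auto
          obtain ha where ha: "ha \<in> H" "A = orbit aH ha" using AB unfolding E_def Hhat_def by auto
          obtain hb where hb: "hb \<in> H" "B = orbit aH hb" using AB unfolding E_def Hhat_def by auto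
          have "A = orbit aH x" using orbH_eq ha x by blast
          moreover have "B = orbit aH x" using orbH_eq hb x by blast
          ultimately show False using AB by simp
        qed
      qed
      have finEo: "\<And>A. A \<in> E \<Longrightarrow> finite A"
        using finH orbH_sub unfolding E_def Hhat_def by (auto intro: finite_subset)
      have cardF: "card F = (\<Sum>Eo\<in>E. dj * b Eo)"
      proof -
        have "card F = card G" unfolding FG using injrv by (simp add: card_image)
        also have "\<dots> = sum card E" unfolding UE[symmetric] using card_Union_disjoint[OF disj finEo] by simp
        also have "\<dots> = (\<Sum>Eo\<in>E. dj * b Eo)" using perEo by (intro sum.cong) auto
        finally show ?thesis .
      qed
      have lhs: "cartan (tilde_H n Ihat H s t aI aH) (tilde_s Ihat aI s) (tilde_t Ihat aI t)
                  (tilde_aI aI \<eta>) (i, 1) (j, 1) = - (\<Sum>Eo\<in>E. real (b Eo))"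
      proof -
        have "real (card T) = real ei * (\<Sum>Eo\<in>E. real (b Eo))"
          unfolding cardT by (simp add: sum_distrib_left)
        then show ?thesis unfolding cartan_def T_def[symmetric] tOi(2) using False eipos by simp
      qed
      have rhs: "cartan H s t aI j i = - (\<Sum>Eo\<in>E. real (b Eo))"
      proof -
        have "real (card F) = real dj * (\<Sum>Eo\<in>E. real (b Eo))"
          unfolding cardF by (simp add: sum_distrib_left)
        then show ?thesis unfolding cartan_def F_def[symmetric] dj_def[symmetric] using False dipos by simp
      qed
      show ?thesis using lhs rhs by simp
    qed
  qed
qed

end
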